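(* Let $q$ be odd, $V$ an $n$-dimensional space over $\mathbb{F}_q$, $n\ge4$, $G$ one of $\mathrm{SL}(V),\mathrm{Sp}(V),\mathrm{SU}(V)$, $\mathcal T$ the set of transvections of $G$, and $X\subseteq\mathcal T$ a generating set of $G$ satisfying: (P2) ${}_VX$ spans $V$, $X_{V^*}$ spans $V^*$, $\Gamma(X)$ strongly connected; (P3) the weights of all cycles of $\Gamma(X)$ generate $\mathbb{F}_q$; (P4) if $G=\mathrm{Sp}(V)$ every cycle of $\Gamma(\mathcal T)$ is symplectic; (P5) if $G=\mathrm{SL}(V)$ and $q$ is a square, $\Gamma(X)$ contains a non-unitary cycle; (P6) the directed diameter of $\Gamma(X'')$ is at most $2$ for every $X\subseteq X''\subseteq\mathcal T$; (P7) the two-way diameter of $\Gamma(X'')$ is at most $6$ for every $X\subseteq X''\subseteq \mathcal T$. For $k\ge2$ let $L_k=L_k(X)$ be the subfield of $\mathbb{F}_q$ generated by the weights of the cycles of $\Gamma(X)$ of length at most $k$. Assume $k\ge 3$ is an integer with $L_{k-1}\ne L_k$. Then (1) $k\in\{3,4,5\}$; (2) if $k\in\{4,5\}$ and $(r_1,\dots,r_k)$ is a cycle of $\Gamma(X)$ whose weight is not in $L_{k-1}$, then there is an index $i$, $1\le i\le k$, such that $[r_i,r_{i+2}]$ is not an edge of $\Gamma(X)$ (indices mod $k$).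
   Context: Transvections $s=1+u_s\otimes\phi_s$ ($x\mapsto x+\phi_s(x)u_s$). $\Gamma(Y)$: directed graph on $Y$ with edge $[s,t]$ iff $\phi_t(u_s)\ne0$; two-way edges/paths/diameter as usual (both directions are edges). Weight of $(r_1,\dots,r_k)$: $w=\prod_{i=1}^k\phi_{r_{i+1}}(u_{r_i})$ (indices mod $k$); a $k$-tuple with nonzero weight is a cycle of length $k$. Symplectic: $w(r_1,\dots,r_k)+(-1)^{k+1}w(r_k,\dots,r_1)=0$; unitary: $w(r_1,\dots,r_k)+(-1)^{k+1}w(r_k,\dots,r_1)^{\sqrt q}=0$. ${}_VX$, $X_{V^*}$: the sets of $u_s$, resp. $\phi_s$, for $s\in X$. *)

theory Defs
  imports "HOL-Analysis.Analysis"
begin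

type_synonym ('a,'n) mtx = "'a^'n^'n"

text \<open>Evaluation of a dual vector (represented by its coordinate vector) at a vector.\<close>
definition dual_app :: "'a::field^'n \<Rightarrow> 'a^'n \<Rightarrow> 'a" where
  "dual_app \<phi> x = (\<Sum>i\<in>UNIV. \<phi>$i * x$i)"

definition outer :: "'a::field^'n \<Rightarrow> 'a^'n \<Rightarrow> 'a^'n^'n" where
  "outer u \<phi> = (\<chi> i j. u$i * \<phi>$j)"

definition is_transv_rep :: "'a::field^'n^'n \<Rightarrow> 'a^'n \<Rightarrow> 'a^'n \<Rightarrow> bool" where
  "is_transv_rep s u \<phi> \<longleftrightarrow> u \<noteq> 0 \<and> \<phi> \<noteq> 0 \<and> dual_app \<phi> u = 0 \<and> s = mat 1 + outer u \<phi>"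

definition is_transvection :: "'a::field^'n^'n \<Rightarrow> bool" where
  "is_transvection s \<longleftrightarrow> (\<exists>u \<phi>. is_transv_rep s u \<phi>)"

definition u_of :: "'a::field^'n^'n \<Rightarrow> 'a^'n" where
  "u_of s = fst (SOME p. is_transv_rep s (fst p) (snd p))"

definition phi_of :: "'a::field^'n^'n \<Rightarrow> 'a^'n" where
  "phi_of s = snd (SOME p. is_transv_rep s (fst p) (snd p))"

definition SL_grp :: "('a::field,'n::finite) mtx set" where
  "SL_grp = {A. det A = 1}"

definition alt_nondeg :: "'a::field^'n^'n \<Rightarrow> bool" where
  "alt_nondeg J \<longleftrightarrow> (\<forall>i. J$i$i = 0) \<and> transpose J = - J \<and> det J \<noteq> 0"

definition Sp_grp :: "('a::field,'n::finite) mtx \<Rightarrow> ('a,'n) mtx set" where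
  "Sp_grp J = {A. transpose A ** J ** A = J}"

text \<open>Field automorphism x |-> x^r (r = sqrt q), applied entrywise.\<close>
definition frob_mat :: "nat \<Rightarrow> 'a::field^'n^'n \<Rightarrow> 'a^'n^'n" where
  "frob_mat r A = (\<chi> i j. (A$i$j) ^ r)"

definition herm_nondeg :: "nat \<Rightarrow> 'a::field^'n^'n \<Rightarrow> bool" where
  "herm_nondeg r J \<longleftrightarrow> transpose (frob_mat r J) = J \<and> det J \<noteq> 0"

definition SU_grp :: "nat \<Rightarrow> ('a::field,'n::finite) mtx \<Rightarrow> ('a,'n) mtx set" where
  "SU_grp r J = {A. det A = 1 \<and> transpose (frob_mat r A) ** J ** A = J}"

definition is_SL :: "('a::{field,finite},'n::finite) mtx set \<Rightarrow> bool" where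
  "is_SL G \<longleftrightarrow> G = SL_grp"

definition is_Sp :: "('a::{field,finite},'n::finite) mtx set \<Rightarrow> bool" where
  "is_Sp G \<longleftrightarrow> (\<exists>J. alt_nondeg J \<and> G = Sp_grp J)"

definition is_SU :: "('a::{field,finite},'n::finite) mtx set \<Rightarrow> bool" where
  "is_SU G \<longleftrightarrow> (\<exists>r J. r * r = CARD('a) \<and> herm_nondeg r J \<and> G = SU_grp r J)"

inductive_set mgen :: "('a::field,'n::finite) mtx set \<Rightarrow> ('a,'n) mtx set" for X where
  one: "mat 1 \<in> mgen X"
| mult: "a \<in> X \<Longrightarrow> b \<in> mgen X \<Longrightarrow> a ** b \<in> mgen X"
| inv: "a \<in> X \<Longrightarrow> a ** c = mat 1 \<Longrightarrow> b \<in> mgen X \<Longrightarrow> c ** b \<in> mgen X"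

definition edge :: "('a::field,'n::finite) mtx set \<Rightarrow> ('a,'n) mtx \<Rightarrow> ('a,'n) mtx \<Rightarrow> bool" where
  "edge Y s t \<longleftrightarrow> s \<in> Y \<and> t \<in> Y \<and> dual_app (phi_of t) (u_of s) \<noteq> 0"

definition twoway_edge :: "('a::field,'n::finite) mtx set \<Rightarrow> ('a,'n) mtx \<Rightarrow> ('a,'n) mtx \<Rightarrow> bool" where
  "twoway_edge Y s t \<longleftrightarrow> edge Y s t \<and> edge Y t s"

definition strongly_connected :: "('a::field,'n::finite) mtx set \<Rightarrow> bool" where
  "strongly_connected Y \<longleftrightarrow> (\<forall>s\<in>Y. \<forall>t\<in>Y. (s, t) \<in> {(a,b). edge Y a b}\<^sup>*)"

definition dir_diam_le :: "('a::field,'n::finite) mtx set \<Rightarrow> nat \<Rightarrow> bool" where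
  "dir_diam_le Y d \<longleftrightarrow> (\<forall>s\<in>Y. \<forall>t\<in>Y. \<exists>m p. m \<le> d \<and> p 0 = s \<and> p m = t \<and>
      (\<forall>i<m. edge Y (p i) (p (Suc i))))"

definition twoway_diam_le :: "('a::field,'n::finite) mtx set \<Rightarrow> nat \<Rightarrow> bool" where
  "twoway_diam_le Y d \<longleftrightarrow> (\<forall>s\<in>Y. \<forall>t\<in>Y. \<exists>m p. m \<le> d \<and> p 0 = s \<and> p m = t \<and>
      (\<forall>i<m. twoway_edge Y (p i) (p (Suc i))))"

definition weight :: "('a::field,'n::finite) mtx list \<Rightarrow> 'a" where
  "weight r = (\<Prod>i<length r. dual_app (phi_of (r ! ((i+1) mod length r))) (u_of (r ! i)))"

definition is_cycle :: "('a::field,'n::finite) mtx set \<Rightarrow> ('a,'n) mtx list \<Rightarrow> bool" where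
  "is_cycle Y r \<longleftrightarrow> length r \<ge> 1 \<and> set r \<subseteq> Y \<and> weight r \<noteq> 0"

definition symplectic_cycle :: "('a::field,'n::finite) mtx list \<Rightarrow> bool" where
  "symplectic_cycle r \<longleftrightarrow> weight r + (-1)^(length r + 1) * weight (rev r) = 0"

definition unitary_cycle :: "nat \<Rightarrow> ('a::field,'n::finite) mtx list \<Rightarrow> bool" where
  "unitary_cycle sq r \<longleftrightarrow> weight r + (-1)^(length r + 1) * (weight (rev r)) ^ sq = 0"

definition is_subfield :: "'a::field set \<Rightarrow> bool" where
  "is_subfield F \<longleftrightarrow> 0 \<in> F \<and> 1 \<in> F \<and> (\<forall>x\<in>F. \<forall>y\<in>F. x + y \<in> F \<and> x * y \<in> F) \<and>
     (\<forall>x\<in>F. - x \<in> F \<and> inverse x \<in> F)"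

definition subfield_gen :: "'a::field set \<Rightarrow> 'a set" where
  "subfield_gen S = \<Inter>{F. is_subfield F \<and> S \<subseteq> F}"

definition Lk :: "('a::field,'n::finite) mtx set \<Rightarrow> nat \<Rightarrow> 'a set" where
  "Lk X k = subfield_gen {weight r | r. is_cycle X r \<and> length r \<le> k}"

end

theory Submission
  imports Defs
begin


fun pp :: "('a::field,'n::finite) mtx list \<Rightarrow> 'a" where
  "pp [] = 1"
| "pp [x] = 1"
| "pp (x#y#zs) = dual_app (phi_of y) (u_of x) * pp (y#zs)"

lemma pp_prod: "pp l = (\<Prod>i<length l - 1. dual_app (phi_of (l!Suc i)) (u_of (l!i)))"
proof (induction l rule: pp.induct)
  case (3 x y zs)
  have "(\<Prod>i<length (x#y#zs) - 1. dual_app (phi_of ((x#y#zs)!Suc i)) (u_of ((x#y#zs)!i)))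
     = (\<Prod>i<Suc (length (y#zs) - 1). dual_app (phi_of ((x#y#zs)!Suc i)) (u_of ((x#y#zs)!i)))"
    by simp
  also have "\<dots> = dual_app (phi_of y) (u_of x) *
      (\<Prod>i<length (y#zs) - 1. dual_app (phi_of ((x#y#zs)!Suc (Suc i))) (u_of ((x#y#zs)!Suc i)))"
    by (subst prod.lessThan_Suc_shift) simp
  also have "\<dots> = dual_app (phi_of y) (u_of x) * pp (y#zs)"
    using 3 by simp
  finally show ?case by simp
qed simp_all

lemma weight_pp: "weight (x#xs) = pp (x#xs@[x])"
proof -
  let ?n = "Suc (length xs)"
  have "weight (x#xs) = (\<Prod>i<?n. dual_app (phi_of ((x#xs) ! ((i+1) mod ?n))) (u_of ((x#xs) ! i)))"
    unfolding weight_def by simp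
  also have "\<dots> = (\<Prod>i<?n. dual_app (phi_of ((x#xs@[x]) ! Suc i)) (u_of ((x#xs@[x]) ! i)))"
  proof (rule prod.cong)
    fix i assume "i \<in> {..<?n}"
    then have i: "i < ?n" by simp
    have a: "(x#xs@[x]) ! i = (x#xs) ! i" using i
      by (metis append_Cons nth_append length_Cons)
    have b: "(x#xs@[x]) ! Suc i = (x#xs) ! ((i+1) mod ?n)"
    proof (cases "Suc i < ?n")
      case True then show ?thesis by (simp add: nth_append)
    next
      case False then have "Suc i = ?n" using i by simp
      then show ?thesis by (simp add: nth_append)
    qed
    show "dual_app (phi_of ((x#xs) ! ((i+1) mod ?n))) (u_of ((x#xs) ! i)) =
          dual_app (phi_of ((x#xs@[x]) ! Suc i)) (u_of ((x#xs@[x]) ! i))" using a b by simp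
  qed simp
  also have "\<dots> = pp (x#xs@[x])" by (simp add: pp_prod)
  finally show ?thesis .
qed

lemma pp_app: "pp (xs @ [x]) * pp (x # ys) = pp (xs @ x # ys)"
  by (induction xs rule: pp.induct) (auto simp: mult.assoc)



lemma sfD: assumes "is_subfield F"
  shows "0 \<in> F" "1 \<in> F" "x \<in> F \<Longrightarrow> y \<in> F \<Longrightarrow> x + y \<in> F"
    "x \<in> F \<Longrightarrow> y \<in> F \<Longrightarrow> x * y \<in> F" "x \<in> F \<Longrightarrow> - x \<in> F"
    "x \<in> F \<Longrightarrow> inverse x \<in> F"
  using assms unfolding is_subfield_def by blast+

lemma sg_sub: "is_subfield (subfield_gen S)"
proof -
  let ?I = "{F. is_subfield F \<and> S \<subseteq> F}"
  have mem: "x \<in> F" if "x \<in> \<Inter>?I" "is_subfield F" "S \<subseteq> F" for x F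
    using that by blast
  have c0: "0 \<in> \<Inter>?I" "1 \<in> \<Inter>?I" by (auto intro: sfD(1) sfD(2))
  have c1: "x + y \<in> \<Inter>?I" "x * y \<in> \<Inter>?I" if "x \<in> \<Inter>?I" "y \<in> \<Inter>?I" for x y
  proof -
    show "x + y \<in> \<Inter>?I"
    proof (rule InterI)
      fix F assume F: "F \<in> ?I"
      then have "is_subfield F" "S \<subseteq> F" by auto
      then show "x + y \<in> F" using sfD(3) mem that by metis
    qed
    show "x * y \<in> \<Inter>?I"
    proof (rule InterI)
      fix F assume F: "F \<in> ?I"
      then have "is_subfield F" "S \<subseteq> F" by auto
      then show "x * y \<in> F" using sfD(4) mem that by metis
    qed
  qed
  have c2: "- x \<in> \<Inter>?I" "inverse x \<in> \<Inter>?I" if "x \<in> \<Inter>?I" for x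
  proof -
    show "- x \<in> \<Inter>?I"
    proof (rule InterI)
      fix F assume F: "F \<in> ?I"
      then have "is_subfield F" "S \<subseteq> F" by auto
      then show "- x \<in> F" using sfD(5) mem that by metis
    qed
    show "inverse x \<in> \<Inter>?I"
    proof (rule InterI)
      fix F assume F: "F \<in> ?I"
      then have "is_subfield F" "S \<subseteq> F" by auto
      then show "inverse x \<in> F" using sfD(6) mem that by metis
    qed
  qed
  show ?thesis unfolding subfield_gen_def is_subfield_def[of "\<Inter>?I"]
    using c0 c1 c2 by simp
qed


lemma sg_incl: "S \<subseteq> subfield_gen S"
  unfolding subfield_gen_def by (rule Inter_greatest) simp

lemma sg_least: assumes "is_subfield F" "S \<subseteq> F" shows "subfield_gen S \<subseteq> F"
  unfolding subfield_gen_def by (rule Inter_lower) (simp add: assms)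

lemma Lk_in: "is_cycle X r \<Longrightarrow> length r \<le> k \<Longrightarrow> weight r \<in> Lk X k"
  unfolding Lk_def by (rule subsetD[OF sg_incl]) blast

lemma Lk_sub: "is_subfield (Lk X k)"
  unfolding Lk_def by (rule sg_sub)

lemma Lk_mono: "j \<le> k \<Longrightarrow> Lk X j \<subseteq> Lk X k"
proof -
  assume jk: "j \<le> k"
  have "{weight r | r. is_cycle X r \<and> length r \<le> j} \<subseteq> Lk X k"
  proof (rule subsetI)
    fix w assume "w \<in> {weight r | r. is_cycle X r \<and> length r \<le> j}"
    then obtain r where "w = weight r" "is_cycle X r" "length r \<le> j" by blast
    then show "w \<in> Lk X k" using Lk_in[of X r k] jk by simp
  qed
  then show ?thesis unfolding Lk_def[of X j] by (rule sg_least[OF Lk_sub])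
qed

lemma sf_mult: "is_subfield F \<Longrightarrow> a \<in> F \<Longrightarrow> b \<in> F \<Longrightarrow> a * b \<in> F"
  by (rule sfD(4))

lemma key:
  assumes "is_subfield F" "wA \<in> F" "wB \<in> F" "wC \<in> F" "wC \<noteq> 0"
    "wr = al * be" "wA = al * ga" "wB = de * be" "wC = de * ga"
  shows "wr \<in> F"
proof -
  have "wA * wB * inverse wC = (al * be) * (wC * inverse wC)"
    using assms(7-9) by (simp only: ac_simps)
  also have "\<dots> = wr" using assms(5,6) by simp
  finally have "wr = wA * wB * inverse wC" by simp
  moreover have "inverse wC \<in> F" using sfD(6)[OF assms(1,4)] .
  ultimately show ?thesis using sf_mult[OF assms(1)] assms(2,3) by metis
qed


lemma edge_nz: "edge Y s t \<Longrightarrow> pp [s,t] \<noteq> 0"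
  unfolding edge_def by simp

lemma path2:
  assumes "dir_diam_le Y 2" "s \<in> Y" "t \<in> Y"
  shows "s = t \<or> (\<exists>P. length P \<le> 1 \<and> set P \<subseteq> Y \<and> pp (s#P@[t]) \<noteq> 0)"
proof -
  obtain m p where m: "m \<le> 2" "p 0 = s" "p m = t" "\<forall>i<m. edge Y (p i) (p (Suc i))"
    using assms unfolding dir_diam_le_def by blast
  have "m = 0 \<or> m = 1 \<or> m = 2" using m(1) by auto
  then show ?thesis
  proof (elim disjE)
    assume "m = 0" then show ?thesis using m by simp
  next
    assume "m = 1" then have "edge Y s t" using m by auto
    then show ?thesis using edge_nz[of Y s t] by (intro disjI2 exI[of _ "[]"]) simp
  next
    assume m2: "m = 2"
    then have e1: "edge Y s (p 1)" and e2: "edge Y (p 1) t" using m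
      by (auto simp: numeral_2_eq_2)
    then have "p 1 \<in> Y" unfolding edge_def by simp
    then show ?thesis using e1 e2 unfolding edge_def
      by (intro disjI2 exI[of _ "[p 1]"]) simp
  qed
qed



lemma long_cycle:
  assumes k6: "k \<ge> 6" and cyc: "is_cycle X r" and len: "length r = k" and dd: "dir_diam_le X 2"
  shows "weight r \<in> Lk X (k - 1)"
proof -
  obtain r0 r1 r2 r3 rest where r: "r = r0#r1#r2#r3#rest"
    using len k6 by (cases r rule: list.exhaust; cases "tl r"; cases "tl (tl r)"; cases "tl (tl (tl r))") auto
  have lr: "length rest = k - 4" using len r by simp
  have X: "r0 \<in> X" "r1 \<in> X" "r2 \<in> X" "r3 \<in> X" "set rest \<subseteq> X"
    using cyc r unfolding is_cycle_def by auto
  define al where "al = pp [r0,r1,r2,r3]"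
  define be where "be = pp (r3#rest@[r0])"
  have wr: "weight r = al * be"
    using pp_app[of "[r0,r1,r2]" r3 "rest@[r0]"] unfolding al_def be_def r
    by (simp add: weight_pp)
  have nz: "al \<noteq> 0" "be \<noteq> 0" using wr cyc unfolding is_cycle_def by auto
  have F: "is_subfield (Lk X (k-1))" by (rule Lk_sub)
  show ?thesis
  proof (cases "r0 = r3")
    case True
    have w1: "weight [r0,r1,r2] = al" unfolding al_def using True by (simp add: weight_pp)
    have w2: "weight (r3#rest) = be" unfolding be_def using True by (simp add: weight_pp)
    have "weight [r0,r1,r2] \<in> Lk X (k-1)"
      apply (rule Lk_in) using w1 nz X k6 unfolding is_cycle_def by auto
    moreover have "weight (r3#rest) \<in> Lk X (k-1)"
      apply (rule Lk_in) using w2 nz X k6 lr unfolding is_cycle_def by auto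
    ultimately show ?thesis using wr w1 w2 sf_mult[OF F] by metis
  next
    case False
    obtain P where P: "length P \<le> 1" "set P \<subseteq> X" "pp (r0#P@[r3]) \<noteq> 0"
      using path2[OF dd X(1) X(4)] False by blast
    obtain Q where Q: "length Q \<le> 1" "set Q \<subseteq> X" "pp (r3#Q@[r0]) \<noteq> 0"
      using path2[OF dd X(4) X(1)] False by metis
    define ga where "ga = pp (r3#Q@[r0])"
    define de where "de = pp (r0#P@[r3])"
    have wA: "weight ([r0,r1,r2,r3]@Q) = al * ga"
      using pp_app[of "[r0,r1,r2]" r3 "Q@[r0]"] unfolding al_def ga_def
      by (simp add: weight_pp)
    have wB: "weight (r0#P@r3#rest) = de * be"
      using pp_app[of "r0#P" r3 "rest@[r0]"] unfolding de_def be_def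
      by (simp add: weight_pp)
    have wC: "weight (r0#P@r3#Q) = de * ga"
      using pp_app[of "r0#P" r3 "Q@[r0]"] unfolding de_def ga_def
      by (simp add: weight_pp)
    have nz2: "ga \<noteq> 0" "de \<noteq> 0" using P Q unfolding ga_def de_def by auto
    show ?thesis
    proof (rule key[OF F _ _ _ _ wr wA wB wC])
      show "weight ([r0,r1,r2,r3]@Q) \<in> Lk X (k-1)"
        apply (rule Lk_in) using wA nz nz2 X Q k6 unfolding is_cycle_def by auto
      show "weight (r0#P@r3#rest) \<in> Lk X (k-1)"
        apply (rule Lk_in) using wB nz nz2 X P k6 lr unfolding is_cycle_def by auto
      show "weight (r0#P@r3#Q) \<in> Lk X (k-1)"
        apply (rule Lk_in) using wC nz nz2 X P Q k6 unfolding is_cycle_def by auto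
      show "weight (r0#P@r3#Q) \<noteq> 0" using wC nz2 by simp
    qed
  qed
qed



lemma Lk_step:
  assumes k: "k \<ge> 1" and H: "\<And>r. is_cycle X r \<Longrightarrow> length r = k \<Longrightarrow> weight r \<in> Lk X (k - 1)"
  shows "Lk X (k - 1) = Lk X k"
proof
  show "Lk X (k - 1) \<subseteq> Lk X k" by (rule Lk_mono) simp
  show "Lk X k \<subseteq> Lk X (k - 1)"
    unfolding Lk_def[of X k]
  proof (rule sg_least[OF Lk_sub], safe)
    fix r assume c: "is_cycle X r" "length r \<le> k"
    show "weight r \<in> Lk X (k - 1)"
    proof (cases "length r = k")
      case True then show ?thesis using H c by blast
    next
      case False then show ?thesis using c Lk_in[of X r "k-1"] by simp
    qed
  qed
qed




abbreviation ff where "ff s t \<equiv> dual_app (phi_of t) (u_of s)"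

lemma cyc_intro: "set l \<subseteq> X \<Longrightarrow> l \<noteq> [] \<Longrightarrow> weight l \<noteq> 0 \<Longrightarrow> is_cycle X l"
  unfolding is_cycle_def by (cases l) auto

lemma len4: "length r = 4 \<Longrightarrow> \<exists>a b c d. r = [a,b,c,d]"
  by (auto simp: length_Suc_conv numeral_eq_Suc)

lemma len5: "length r = 5 \<Longrightarrow> \<exists>a b c d e. r = [a,b,c,d,e]"
  by (auto simp: length_Suc_conv numeral_eq_Suc)

lemma case4:
  assumes cyc: "is_cycle X r" and len: "length r = 4"
    and H: "\<forall>i<4. edge X (r ! i) (r ! ((i + 2) mod 4))"
  shows "weight r \<in> Lk X 3"
proof -
  obtain a b c d where r: "r = [a,b,c,d]" using len4[OF len] by blast
  have e1: "edge X a c" using H[rule_format, of 0] r by simp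
  have e2: "edge X c a" using H[rule_format, of 2] r by simp
  have X: "a \<in> X" "b \<in> X" "c \<in> X" "d \<in> X" using cyc r unfolding is_cycle_def by auto
  have n1: "ff a c \<noteq> 0" "ff c a \<noteq> 0" using e1 e2 unfolding edge_def by auto
  have wr: "weight r = (ff a b * ff b c) * (ff c d * ff d a)"
    unfolding r by (simp add: weight_pp ac_simps)
  have n2: "ff a b * ff b c \<noteq> 0" "ff c d * ff d a \<noteq> 0"
    using cyc wr unfolding is_cycle_def by auto
  have wA: "weight [a,b,c] = (ff a b * ff b c) * ff c a" by (simp add: weight_pp ac_simps)
  have wB: "weight [c,d,a] = ff a c * (ff c d * ff d a)" by (simp add: weight_pp ac_simps)
  have wC: "weight [a,c] = ff a c * ff c a" by (simp add: weight_pp ac_simps)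
  show ?thesis
  proof (rule key[OF Lk_sub _ _ _ _ wr wA wB wC])
    show "weight [a,b,c] \<in> Lk X 3"
      by (rule Lk_in[OF cyc_intro]) (use X wA n1 n2 in auto)
    show "weight [c,d,a] \<in> Lk X 3"
      by (rule Lk_in[OF cyc_intro]) (use X wB n1 n2 in auto)
    show "weight [a,c] \<in> Lk X 3"
      by (rule Lk_in[OF cyc_intro]) (use X wC n1 n2 in auto)
    show "weight [a,c] \<noteq> 0" using wC n1 by simp
  qed
qed

lemma case5:
  assumes cyc: "is_cycle X r" and len: "length r = 5"
    and H: "\<forall>i<5. edge X (r ! i) (r ! ((i + 2) mod 5))"
  shows "weight r \<in> Lk X 4"
proof -
  obtain a b c d e where r: "r = [a,b,c,d,e]" using len5[OF len] by blast
  have e1: "edge X a c" using H[rule_format, of 0] r by simp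
  have e2: "edge X c e" using H[rule_format, of 2] r by simp
  have X: "a \<in> X" "b \<in> X" "c \<in> X" "d \<in> X" "e \<in> X" using cyc r unfolding is_cycle_def by auto
  have n1: "ff a c \<noteq> 0" "ff c e \<noteq> 0" using e1 e2 unfolding edge_def by auto
  have wr: "weight r = (ff a b * ff b c) * (ff c d * ff d e * ff e a)"
    unfolding r by (simp add: weight_pp ac_simps)
  have n2: "ff a b * ff b c \<noteq> 0" "ff c d * ff d e * ff e a \<noteq> 0"
    using cyc wr unfolding is_cycle_def by auto
  have n3: "ff e a \<noteq> 0" using n2 by auto
  have wA: "weight [a,b,c,e] = (ff a b * ff b c) * (ff c e * ff e a)" by (simp add: weight_pp ac_simps)
  have wB: "weight [a,c,d,e] = ff a c * (ff c d * ff d e * ff e a)" by (simp add: weight_pp ac_simps)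
  have wC: "weight [a,c,e] = ff a c * (ff c e * ff e a)" by (simp add: weight_pp ac_simps)
  show ?thesis
  proof (rule key[OF Lk_sub _ _ _ _ wr wA wB wC])
    show "weight [a,b,c,e] \<in> Lk X 4"
      by (rule Lk_in[OF cyc_intro]) (use X wA n1 n2 n3 in auto)
    show "weight [a,c,d,e] \<in> Lk X 4"
      by (rule Lk_in[OF cyc_intro]) (use X wB n1 n2 in auto)
    show "weight [a,c,e] \<in> Lk X 4"
      by (rule Lk_in[OF cyc_intro]) (use X wC n1 n3 in auto)
    show "weight [a,c,e] \<noteq> 0" using wC n1 n3 by simp
  qed
qed


theorem lemma4p3:
  fixes G :: "('a::{field,finite},'n::finite) mtx set"
    and X T :: "('a,'n) mtx set"
    and k :: nat
  assumes q_odd: "odd CARD('a)"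
    and dim: "CARD('n) \<ge> 4"
    and G_kind: "is_SL G \<or> is_Sp G \<or> is_SU G"
    and T_def: "T = {s \<in> G. is_transvection s}"
    and XT: "X \<subseteq> T"
    and gen: "mgen X = G"
    and P2: "vec.span (u_of ` X) = UNIV" "vec.span (phi_of ` X) = UNIV" "strongly_connected X"
    and P3: "subfield_gen {weight r | r. is_cycle X r} = UNIV"
    and P4: "is_Sp G \<Longrightarrow> \<forall>r. is_cycle T r \<longrightarrow> symplectic_cycle r"
    and P5: "\<And>sq. is_SL G \<Longrightarrow> sq * sq = CARD('a) \<Longrightarrow>
               \<exists>r. is_cycle X r \<and> \<not> unitary_cycle sq r"
    and P6: "\<And>X''. X \<subseteq> X'' \<Longrightarrow> X'' \<subseteq> T \<Longrightarrow> dir_diam_le X'' 2"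
    and P7: "\<And>X''. X \<subseteq> X'' \<Longrightarrow> X'' \<subseteq> T \<Longrightarrow> twoway_diam_le X'' 6"
    and k3: "k \<ge> 3"
    and Lneq: "Lk X (k - 1) \<noteq> Lk X k"
  shows "k \<in> {3, 4, 5} \<and>
    (k \<in> {4, 5} \<longrightarrow> (\<forall>r. is_cycle X r \<and> length r = k \<and> weight r \<notin> Lk X (k - 1) \<longrightarrow>
        (\<exists>i<k. \<not> edge X (r ! i) (r ! ((i + 2) mod k)))))"
proof -
  have dd: "dir_diam_le X 2" using P6[of X] XT by simp
  have k345: "k \<in> {3, 4, 5}"
  proof (rule ccontr)
    assume "k \<notin> {3, 4, 5}"
    then have k6: "k \<ge> 6" using k3 by auto
    have "Lk X (k - 1) = Lk X k"
      by (rule Lk_step) (use k6 long_cycle[OF k6 _ _ dd] in auto)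
    then show False using Lneq by simp
  qed
  moreover have "\<exists>i<k. \<not> edge X (r ! i) (r ! ((i + 2) mod k))"
    if k45: "k \<in> {4, 5}" and c: "is_cycle X r" "length r = k" "weight r \<notin> Lk X (k - 1)" for r
  proof (rule ccontr)
    assume "\<not> (\<exists>i<k. \<not> edge X (r ! i) (r ! ((i + 2) mod k)))"
    then have H: "\<forall>i<k. edge X (r ! i) (r ! ((i + 2) mod k))" by blast
    from k45 have "k = 4 \<or> k = 5" by simp
    then show False
    proof
      assume "k = 4"
      then show False using case4[of X r] c H by simp
    next
      assume "k = 5"
      then show False using case5[of X r] c H by simp
    qed
  qed
  ultimately show ?thesis by blast
qed

end
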